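(* Let $X$ satisfy assumptions (A) described in the context, with Lévy density $\nu$. If a measurable function $f:\mathbb{R}^d\to[0,\infty)$ satisfies $\int_{\mathbb{R}^d}f(y)(\nu(y)\wedge1)\,dy<\infty$, then for every $x\in\mathbb{R}^d$ we have $\int_{\mathbb{R}^d}f(y)(\nu(x-y)\wedge1)\,dy<\infty$.
   Context: Assumptions (A): (H0) $X$ is a pure-jump isotropic Lévy process in $\mathbb{R}^d$ whose Lévy measure is infinite with density $\nu(x)=\nu(|x|)$. (H1) $\nu(r)$ is nonincreasing, absolutely continuous, $-\nu'(r)/r$ nonincreasing (with $\nu(r)=-\int_r^\infty\nu'(\rho)d\rho$), and for some $a_1$: $\nu(r)\le a_1\nu(r+1)$ for $r\ge1$, $\nu(r)\le a_1\nu(2r)$ for $0<r\le1$. (H2) There is $a_2$ such that for every $x_0$, $r\in(0,1]$ and every $h\ge0$ on $\mathbb{R}^d$ harmonic in $B(x_0,r)$, $\sup_{B(x_0,r/2)}h\le a_2\inf_{B(x_0,r/2)}h$ (a Borel $f$ is harmonic in open $D$ if $f(x)=E^xf(X_{\tau_B})$, absolutely convergent, for $x\in B$, for all bounded open $B$ with $\overline B\subset D$, $\tau_B=\inf\{t>0:X_t\notin B\}$). *)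

theory Defs
  imports "HOL-Probability.Probability"
begin

text \<open>Characteristic exponent of the pure-jump isotropic Levy process with
  Levy density y \<mapsto> nu |y| (no drift, no Gaussian part).\<close>
definition levy_exponent :: "(real \<Rightarrow> real) \<Rightarrow> 'v::euclidean_space \<Rightarrow> real" where
  "levy_exponent \<nu> \<xi> = (LINT y|lborel. (1 - cos (\<xi> \<bullet> y)) * \<nu> (norm y))"

definition levy_process ::
  "'a measure \<Rightarrow> (real \<Rightarrow> 'a \<Rightarrow> 'v::euclidean_space) \<Rightarrow> ('v \<Rightarrow> real) \<Rightarrow> bool" where
  "levy_process M X \<psi> \<longleftrightarrow>
     prob_space M \<and>
     (\<forall>t\<ge>0. X t \<in> borel_measurable M) \<and>
     (\<forall>\<omega>\<in>space M. X 0 \<omega> = 0) \<and>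
     (\<forall>\<omega>\<in>space M. \<forall>t\<ge>0. continuous (at_right t) (\<lambda>s. X s \<omega>) \<and>
          (t > 0 \<longrightarrow> (\<exists>l. ((\<lambda>s. X s \<omega>) \<longlongrightarrow> l) (at_left t)))) \<and>
     (\<forall>(ts::nat \<Rightarrow> real) n. 0 \<le> ts 0 \<longrightarrow> strict_mono ts \<longrightarrow>
          prob_space.indep_vars M (\<lambda>_. borel)
            (\<lambda>i \<omega>. X (ts (Suc i)) \<omega> - X (ts i) \<omega>) {..<n}) \<and>
     (\<forall>s t \<xi>. 0 \<le> s \<longrightarrow> s \<le> t \<longrightarrow>
          (\<integral>\<omega>. cis (\<xi> \<bullet> (X t \<omega> - X s \<omega>)) \<partial>M) = complex_of_real (exp (- (t - s) * \<psi> \<xi>)))"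

definition exit_time :: "(real \<Rightarrow> 'a \<Rightarrow> 'v::real_normed_vector) \<Rightarrow> 'v \<Rightarrow> 'v set \<Rightarrow> 'a \<Rightarrow> real" where
  "exit_time X x B \<omega> = Inf {t. t > 0 \<and> x + X t \<omega> \<notin> B}"

definition levy_harmonic ::
  "'a measure \<Rightarrow> (real \<Rightarrow> 'a \<Rightarrow> 'v::euclidean_space) \<Rightarrow> ('v \<Rightarrow> real) \<Rightarrow> 'v set \<Rightarrow> bool" where
  "levy_harmonic M X f D \<longleftrightarrow>
     f \<in> borel_measurable borel \<and>
     (\<forall>B. open B \<and> bounded B \<and> closure B \<subseteq> D \<longrightarrow>
        (\<forall>x\<in>B. integrable M (\<lambda>\<omega>. f (x + X (exit_time X x B \<omega>) \<omega>)) \<and>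
                f x = (\<integral>\<omega>. f (x + X (exit_time X x B \<omega>) \<omega>) \<partial>M)))"

end

theory Submission
  imports Defs
begin

lemma nu_pos_aux:
  fixes \<nu> :: "real \<Rightarrow> real" and A K :: real
  assumes nn: "\<And>r. r > 0 \<Longrightarrow> \<nu> r \<ge> 0"
    and mono: "\<And>r s. 0 < r \<Longrightarrow> r \<le> s \<Longrightarrow> \<nu> s \<le> \<nu> r"
    and step: "\<And>t. t > 0 \<Longrightarrow> \<nu> t \<le> A * \<nu> (t + min t 1)"
    and K: "K > 0" "\<nu> K = 0"
  shows "\<forall>t>0. t + real n * min t 1 \<ge> K \<longrightarrow> \<nu> t = 0"
proof (induction n)
  case 0
  then show ?case using nn mono K by (metis add.right_neutral mult_zero_left of_nat_0 order_antisym)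
next
  case (Suc n)
  show ?case
  proof (intro allI impI)
    fix t :: real assume t: "t > 0" "t + real (Suc n) * min t 1 \<ge> K"
    have g: "t + min t 1 > 0" using t by simp
    have "min (t + min t 1) 1 \<ge> min t 1" using t by simp
    hence "real n * min (t + min t 1) 1 \<ge> real n * min t 1" by (intro mult_left_mono) auto
    hence "t + min t 1 + real n * min (t + min t 1) 1 \<ge> K" using t(2) by (simp add: algebra_simps)
    hence "\<nu> (t + min t 1) = 0" using Suc.IH g by blast
    thus "\<nu> t = 0" using step[OF t(1)] nn[OF t(1)] by simp
  qed
qed

lemma nu_iter:
  fixes \<nu> :: "real \<Rightarrow> real" and A :: real
  assumes nn: "\<And>r. r > 0 \<Longrightarrow> \<nu> r \<ge> 0" and A: "A \<ge> 1"
    and step: "\<And>r. r \<ge> 1 \<Longrightarrow> \<nu> r \<le> A * \<nu> (r + 1)"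
  shows "s \<ge> 1 \<Longrightarrow> \<nu> s \<le> A ^ n * \<nu> (s + real n)"
proof (induction n arbitrary: s)
  case 0 then show ?case by simp
next
  case (Suc n)
  have "\<nu> s \<le> A * \<nu> (s + 1)" using step Suc.prems by blast
  also have "\<dots> \<le> A * (A ^ n * \<nu> (s + 1 + real n))"
    using Suc.IH[of "s+1"] Suc.prems A by (intro mult_left_mono) auto
  finally show ?case by (simp add: algebra_simps)
qed

theorem corollary5p3:
  fixes M :: "'a measure" and X :: "real \<Rightarrow> 'a \<Rightarrow> 'v::euclidean_space"
    and \<nu> :: "real \<Rightarrow> real" and a1 a2 :: real and f :: "'v \<Rightarrow> real"
  assumes H0_process: "levy_process M X (levy_exponent \<nu>)"
    and H0_nonneg: "\<And>r. r > 0 \<Longrightarrow> \<nu> r \<ge> 0"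
    and H0_levy: "(\<integral>\<^sup>+ (y::'v). ennreal (min 1 ((norm y)\<^sup>2) * \<nu> (norm y)) \<partial>lborel) < \<infinity>"
    and H0_infinite: "(\<integral>\<^sup>+ (y::'v). ennreal (\<nu> (norm y)) \<partial>lborel) = \<infinity>"
    and H1_mono: "\<And>r s. 0 < r \<Longrightarrow> r \<le> s \<Longrightarrow> \<nu> s \<le> \<nu> r"
    and H1_deriv: "\<exists>\<nu>'. (\<forall>r>0. set_integrable lborel {r..} \<nu>' \<and>
                          \<nu> r = - (LINT \<rho>:{r..}|lborel. \<nu>' \<rho>)) \<and>
                       (\<forall>r s. 0 < r \<longrightarrow> r \<le> s \<longrightarrow> - \<nu>' s / s \<le> - \<nu>' r / r)"
    and H1_a: "\<And>r. r \<ge> 1 \<Longrightarrow> \<nu> r \<le> a1 * \<nu> (r + 1)"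
    and H1_b: "\<And>r. 0 < r \<Longrightarrow> r \<le> 1 \<Longrightarrow> \<nu> r \<le> a1 * \<nu> (2 * r)"
    and H2: "\<And>x0 r h. 0 < r \<Longrightarrow> r \<le> 1 \<Longrightarrow> (\<forall>y. h y \<ge> 0) \<Longrightarrow>
               levy_harmonic M X h (ball x0 r) \<Longrightarrow>
               (\<forall>y\<in>ball x0 (r/2). \<forall>z\<in>ball x0 (r/2). h y \<le> a2 * h z)"
    and f_meas: "f \<in> borel_measurable borel"
    and f_nonneg: "\<And>y. f y \<ge> 0"
    and f_int: "(\<integral>\<^sup>+ y. ennreal (f y * min (\<nu> (norm y)) 1) \<partial>lborel) < \<infinity>"
  shows "\<forall>x. (\<integral>\<^sup>+ y. ennreal (f y * min (\<nu> (norm (x - y))) 1) \<partial>lborel) < \<infinity>"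
proof
  fix x :: 'v
  define A where "A = max a1 1"
  have A1: "A \<ge> 1" unfolding A_def by simp
  have stepA: "\<And>r. r \<ge> 1 \<Longrightarrow> \<nu> r \<le> A * \<nu> (r + 1)"
  proof -
    fix r :: real assume r: "r \<ge> 1"
    have "a1 * \<nu> (r+1) \<le> A * \<nu> (r+1)" unfolding A_def
      using H0_nonneg[of "r+1"] r by (intro mult_right_mono) auto
    thus "\<nu> r \<le> A * \<nu> (r + 1)" using H1_a[OF r] by linarith
  qed
  have stepB: "\<And>r. 0 < r \<Longrightarrow> r \<le> 1 \<Longrightarrow> \<nu> r \<le> A * \<nu> (2*r)"
  proof -
    fix r :: real assume r: "0 < r" "r \<le> 1"
    have "a1 * \<nu> (2*r) \<le> A * \<nu> (2*r)" unfolding A_def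
      using H0_nonneg[of "2*r"] r by (intro mult_right_mono) auto
    thus "\<nu> r \<le> A * \<nu> (2*r)" using H1_b[OF r] by linarith
  qed
  have step: "\<And>t. t > 0 \<Longrightarrow> \<nu> t \<le> A * \<nu> (t + min t 1)"
  proof -
    fix t :: real assume t: "t > 0"
    show "\<nu> t \<le> A * \<nu> (t + min t 1)"
    proof (cases "t \<le> 1")
      case True
      have "t + min t 1 = 2 * t" using True by simp
      thus ?thesis using stepB[OF t True] by simp
    next
      case False
      have "t + min t 1 = t + 1" using False by simp
      thus ?thesis using stepA[of t] False by simp
    qed
  qed
  have pos: "\<nu> K > 0" if K: "K > 0" for K
  proof (rule ccontr)
    assume "\<not> \<nu> K > 0"
    hence K0: "\<nu> K = 0" using H0_nonneg[OF K] by simp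
    have zero: "\<nu> t = 0" if t: "t > 0" for t
    proof -
      obtain n :: nat where n: "K / min t 1 < real n" using reals_Archimedean2 by blast
      have "K < real n * min t 1" using n t by (simp add: field_simps)
      hence "t + real n * min t 1 \<ge> K" using t by simp
      thus ?thesis using nu_pos_aux[where \<nu>=\<nu> and A=A and K=K and n=n, OF H0_nonneg H1_mono step K K0] t by blast
    qed
    have "(\<integral>\<^sup>+ (y::'v). ennreal (\<nu> (norm y)) \<partial>lborel) = (\<integral>\<^sup>+ (y::'v). 0 \<partial>lborel)"
      by (rule nn_integral_cong_AE) (use AE_lborel_singleton[of "0::'v"] zero in \<open>auto\<close>)
    thus False using H0_infinite by simp
  qed
  define K where "K = 1 + norm x"
  define c where "c = min (\<nu> K) 1"
  have c0: "c > 0" unfolding c_def K_def using pos[of "1 + norm x"] norm_ge_zero[of x] by linarith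
  define n :: nat where "n = nat (ceiling (norm x))"
  have nx: "norm x \<le> real n" unfolding n_def by linarith
  define C where "C = max (A ^ n) (1 / c)"
  have C1: "C \<ge> 1" unfolding C_def using one_le_power[OF A1, of n] by (simp add: le_max_iff_disj)
  have bound: "min (\<nu> (norm (x - y))) 1 \<le> C * min (\<nu> (norm y)) 1" if y: "y \<noteq> 0" "y \<noteq> x" for y
  proof -
    define s where "s = norm (x - y)"
    define r where "r = norm y"
    have s0: "s > 0" and r0: "r > 0" using y unfolding s_def r_def by auto
    have "norm y = norm (x - (x - y))" by simp
    also have "\<dots> \<le> norm x + norm (x - y)" by (rule norm_triangle_ineq4)
    finally have rs: "r \<le> s + norm x" unfolding r_def s_def by simp
    have nr: "\<nu> r \<ge> 0" using H0_nonneg[OF r0] .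
    have key: "min (\<nu> s) 1 \<le> C * min (\<nu> r) 1"
    proof (cases "r \<le> s")
      case True
      hence "min (\<nu> s) 1 \<le> min (\<nu> r) 1" using H1_mono[OF r0 True] by simp
      also have "\<dots> \<le> C * min (\<nu> r) 1" using C1 nr by (simp add: mult_le_cancel_right1)
      finally show ?thesis .
    next
      case False
      show ?thesis
      proof (cases "s \<ge> 1")
        case True
        have "\<nu> s \<le> A ^ n * \<nu> (s + real n)" using nu_iter[where \<nu>=\<nu> and A=A and s=s and n=n, OF H0_nonneg A1 stepA True] .
        also have "\<dots> \<le> A ^ n * \<nu> r"
          using H1_mono[OF r0, of "s + real n"] rs nx A1 by (intro mult_left_mono) auto
        finally have "min (\<nu> s) 1 \<le> min (A ^ n * \<nu> r) 1" by simp
        also have "\<dots> \<le> A ^ n * min (\<nu> r) 1"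
        proof (cases "\<nu> r \<le> 1")
          case True
          hence "min (\<nu> r) 1 = \<nu> r" by simp
          thus ?thesis by simp
        next
          case False
          hence m: "min (\<nu> r) 1 = 1" by simp
          have "1 \<le> A ^ n" by (rule one_le_power[OF A1])
          thus ?thesis unfolding m by simp
        qed
        also have "\<dots> \<le> C * min (\<nu> r) 1" unfolding C_def using nr by (intro mult_right_mono) auto
        finally show ?thesis .
      next
        case False
        have "r \<le> K" unfolding K_def using rs False by simp
        hence "\<nu> K \<le> \<nu> r" using H1_mono[OF r0] by simp
        hence cr: "c \<le> min (\<nu> r) 1" unfolding c_def by simp
        have cC: "1/c \<le> C" unfolding C_def by simp
        have "min (\<nu> s) 1 \<le> 1" by simp
        also have "1 = (1/c) * c" using c0 by simp
        also have "(1/c) * c \<le> C * min (\<nu> r) 1" using c0 cr C1 cC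
          by (intro mult_mono) auto
        finally show ?thesis .
      qed
    qed
    show ?thesis using key unfolding s_def r_def .
  qed
  define g where "g = (\<lambda>r::real. if r > 0 then \<nu> r else 0)"
  have hm: "(\<lambda>r. - g r) \<in> borel_measurable borel"
  proof (rule borel_measurable_piecewise_mono[of "{{0<..}, {..0}}"])
    fix c :: "real set" assume "c \<in> {{0<..}, {..0}}"
    then show "mono_on c (\<lambda>r. - g r)"
      by (auto simp: mono_on_def g_def intro: H1_mono)
  qed auto
  have gm: "g \<in> borel_measurable borel"
    using borel_measurable_uminus[OF hm] by simp
  have Fm: "(\<lambda>y::'v. ennreal (f y * min (g (norm y)) 1)) \<in> borel_measurable lborel"
    using gm f_meas by measurable
  have "(\<integral>\<^sup>+ y. ennreal (f y * min (\<nu> (norm (x - y))) 1) \<partial>lborel)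
      \<le> (\<integral>\<^sup>+ y. ennreal C * ennreal (f y * min (g (norm y)) 1) \<partial>lborel)"
  proof (rule nn_integral_mono_AE)
    show "AE y in lborel. ennreal (f y * min (\<nu> (norm (x - y))) 1)
            \<le> ennreal C * ennreal (f y * min (g (norm y)) 1)"
      using AE_lborel_singleton[of "0::'v"] AE_lborel_singleton[of x]
    proof eventually_elim
      case (elim y)
      have gy: "g (norm y) = \<nu> (norm y)" using elim by (simp add: g_def)
      have "f y * min (\<nu> (norm (x - y))) 1 \<le> f y * (C * min (\<nu> (norm y)) 1)"
        using bound[of y] elim f_nonneg[of y] by (intro mult_left_mono) auto
      also have "\<dots> = C * (f y * min (g (norm y)) 1)" using gy by simp
      finally have "ennreal (f y * min (\<nu> (norm (x - y))) 1) \<le> ennreal (C * (f y * min (g (norm y)) 1))"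
        by (rule ennreal_leI)
      also have "\<dots> = ennreal C * ennreal (f y * min (g (norm y)) 1)"
        using C1 by (intro ennreal_mult') auto
      finally show ?case .
    qed
  qed
  also have "\<dots> = ennreal C * (\<integral>\<^sup>+ y. ennreal (f y * min (g (norm y)) 1) \<partial>lborel)"
    by (rule nn_integral_cmult[OF Fm])
  also have "(\<integral>\<^sup>+ y. ennreal (f y * min (g (norm y)) 1) \<partial>lborel)
       = (\<integral>\<^sup>+ y. ennreal (f y * min (\<nu> (norm y)) 1) \<partial>lborel)"
    by (rule nn_integral_cong_AE, rule eventually_mono[OF AE_lborel_singleton[of "0::'v"]]) (simp add: g_def)
  also have "ennreal C * \<dots> < \<infinity>" using f_int by (simp add: ennreal_mult_less_top)
  finally show "(\<integral>\<^sup>+ y. ennreal (f y * min (\<nu> (norm (x - y))) 1) \<partial>lborel) < \<infinity>" .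
qed

end
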